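(* Let $\varnothing\neq K\subseteq\mathbb R^d$ be compact, let $\delta\ge 0$, and let $\psi:K_\delta\to\mathbb R^d$ satisfy $L_1|x-y|\le|\psi(x)-\psi(y)|\le L_2|x-y|$ for all $x,y\in K_\delta$, where $0<L_1\le L_2<\infty$. Then $$\big(\psi(K)\big)_{L_1\delta}\subseteq\psi(K_\delta)\subseteq\big(\psi(K)\big)_{L_2\delta}.$$
   Context: For $A\subseteq\mathbb R^d$ and $r\ge0$, $A_r=\{x\in\mathbb R^d:\operatorname{dist}(x,A)\le r\}$ is the closed $r$-parallel set of $A$ (so $A_0$ is the closure of $A$). *)

theory Defs
  imports "HOL-Analysis.Analysis"
begin

text \<open>Closed r-parallel set: points at distance at most r from A.
  For A = {} infdist is 0 by convention, but the theorem only uses nonempty sets.\<close>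
definition parallel_set :: "'a::metric_space set \<Rightarrow> real \<Rightarrow> 'a set" where
  "parallel_set A r = {x. infdist x A \<le> r}"

end

theory Submission
  imports Defs
begin

lemma ball_incl:
  fixes \<psi> :: "'a::euclidean_space \<Rightarrow> 'a" and S :: "'a set"
  assumes cont: "continuous_on S \<psi>" and inj: "inj_on \<psi> S"
    and sub: "cball k \<delta> \<subseteq> S" and d: "\<delta> > 0" and L: "L1 > 0"
    and low: "\<And>x y. x \<in> S \<Longrightarrow> y \<in> S \<Longrightarrow> L1 * dist x y \<le> dist (\<psi> x) (\<psi> y)"
  shows "cball (\<psi> k) (L1 * \<delta>) \<subseteq> \<psi> ` cball k \<delta>"
proof -
  define B where "B = ball (\<psi> k) (L1 * \<delta>)"
  define U where "U = \<psi> ` ball k \<delta>"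
  define C where "C = \<psi> ` cball k \<delta>"
  have kS: "k \<in> S" using sub d by auto
  have "open U" unfolding U_def
    proof (rule invariance_of_domain)
    have "ball k \<delta> \<subseteq> S" using sub by auto
    thus "continuous_on (ball k \<delta>) \<psi>" using cont by (rule continuous_on_subset[rotated])
    show "inj_on \<psi> (ball k \<delta>)" using inj \<open>ball k \<delta> \<subseteq> S\<close> by (rule inj_on_subset)
  qed simp
  have "compact C" unfolding C_def
    by (rule compact_continuous_image) (use cont sub in \<open>auto intro: continuous_on_subset\<close>)
  hence "closed C" by (rule compact_imp_closed)
  have eq: "B \<inter> U = B \<inter> C"
  proof
    show "B \<inter> U \<subseteq> B \<inter> C" unfolding U_def C_def by auto
    show "B \<inter> C \<subseteq> B \<inter> U"
    proof
      fix w assume w: "w \<in> B \<inter> C"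
      then obtain x where x: "x \<in> cball k \<delta>" "w = \<psi> x" unfolding C_def by auto
      have "x \<in> S" using x sub by auto
      have "L1 * dist k x \<le> dist (\<psi> k) (\<psi> x)" using low kS \<open>x \<in> S\<close> by auto
      also have "\<dots> < L1 * \<delta>" using w x unfolding B_def by auto
      finally have "dist k x < \<delta>" using L by simp
      thus "w \<in> B \<inter> U" using w x unfolding U_def by auto
    qed
  qed
  have "connected B" unfolding B_def by simp
  moreover have "openin (top_of_set B) (B \<inter> U)" using \<open>open U\<close> by (simp add: openin_open_Int)
  moreover have "closedin (top_of_set B) (B \<inter> U)" using \<open>closed C\<close> eq by (simp add: closedin_closed_Int)
  ultimately have "B \<inter> U = {} \<or> B \<inter> U = B" unfolding connected_clopen by blast
  moreover have "\<psi> k \<in> B \<inter> U" unfolding B_def U_def using d L by auto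
  ultimately have "B \<subseteq> C" using eq by auto
  hence "closure B \<subseteq> C" using \<open>closed C\<close> by (simp add: closure_minimal)
  moreover have "closure B = cball (\<psi> k) (L1 * \<delta>)" unfolding B_def using d L by simp
  ultimately show ?thesis unfolding C_def by simp
qed

theorem mainTheorem2:
  fixes K :: "'a::euclidean_space set" and \<psi> :: "'a \<Rightarrow> 'a"
    and \<delta> L1 L2 :: real
  assumes "K \<noteq> {}" and "compact K" and "\<delta> \<ge> 0"
    and "0 < L1" and "L1 \<le> L2"
    and "\<And>x y. x \<in> parallel_set K \<delta> \<Longrightarrow> y \<in> parallel_set K \<delta> \<Longrightarrow>
           L1 * dist x y \<le> dist (\<psi> x) (\<psi> y)"
    and "\<And>x y. x \<in> parallel_set K \<delta> \<Longrightarrow> y \<in> parallel_set K \<delta> \<Longrightarrow>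
           dist (\<psi> x) (\<psi> y) \<le> L2 * dist x y"
  shows "parallel_set (\<psi> ` K) (L1 * \<delta>) \<subseteq> \<psi> ` parallel_set K \<delta>
       \<and> \<psi> ` parallel_set K \<delta> \<subseteq> parallel_set (\<psi> ` K) (L2 * \<delta>)"
proof -
  define S where "S = parallel_set K \<delta>"
  have KS: "K \<subseteq> S" unfolding S_def parallel_set_def using assms(3) by (auto simp: infdist_zero)
  have "lipschitz_on L2 S \<psi>" unfolding lipschitz_on_def S_def using assms by auto
  hence cont: "continuous_on S \<psi>" by (rule lipschitz_on_continuous_on)
  have inj: "inj_on \<psi> S"
  proof (rule inj_onI)
    fix x y assume "x \<in> S" "y \<in> S" "\<psi> x = \<psi> y"
    hence "L1 * dist x y \<le> 0" using assms(6) unfolding S_def by fastforce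
    thus "x = y" using assms(4) by (simp add: mult_le_0_iff)
  qed
  have "closed K" using assms(2) by (rule compact_imp_closed)
  have cK: "compact (\<psi> ` K)" using cont KS assms(2) by (meson compact_continuous_image continuous_on_subset)
  have part2: "\<psi> ` S \<subseteq> parallel_set (\<psi> ` K) (L2 * \<delta>)"
  proof
    fix w assume "w \<in> \<psi> ` S"
    then obtain x where x: "x \<in> S" "w = \<psi> x" by auto
    obtain k where k: "k \<in> K" "infdist x K = dist x k"
      using infdist_attains_inf[OF \<open>closed K\<close> assms(1)] by blast
    have "dist x k \<le> \<delta>" using x k unfolding S_def parallel_set_def by auto
    have "dist (\<psi> x) (\<psi> k) \<le> L2 * dist x k" using assms(7) x k KS unfolding S_def by auto
    also have "\<dots> \<le> L2 * \<delta>" using \<open>dist x k \<le> \<delta>\<close> assms(4,5) by (simp add: mult_left_mono)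
    finally have "infdist w (\<psi> ` K) \<le> L2 * \<delta>" using x k by (meson imageI infdist_le2)
    thus "w \<in> parallel_set (\<psi> ` K) (L2 * \<delta>)" unfolding parallel_set_def by simp
  qed
  have part1: "parallel_set (\<psi> ` K) (L1 * \<delta>) \<subseteq> \<psi> ` S"
  proof
    fix z assume z: "z \<in> parallel_set (\<psi> ` K) (L1 * \<delta>)"
    obtain w where w: "w \<in> \<psi> ` K" "infdist z (\<psi> ` K) = dist z w"
      using infdist_attains_inf[OF compact_imp_closed[OF cK]] assms(1) by blast
    then obtain k where k: "k \<in> K" "w = \<psi> k" by auto
    have zc: "z \<in> cball (\<psi> k) (L1 * \<delta>)" using z w k unfolding parallel_set_def by (simp add: dist_commute)
    have sub: "cball k \<delta> \<subseteq> S"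
    proof
      fix y assume "y \<in> cball k \<delta>"
      hence "infdist y K \<le> \<delta>" using k infdist_le2[of k K y \<delta>] by (simp add: dist_commute)
      thus "y \<in> S" unfolding S_def parallel_set_def by simp
    qed
    show "z \<in> \<psi> ` S"
    proof (cases "\<delta> = 0")
      case True
      then show ?thesis using zc k KS by auto
    next
      case False
      hence "\<delta> > 0" using assms(3) by simp
      have "cball (\<psi> k) (L1 * \<delta>) \<subseteq> \<psi> ` cball k \<delta>"
        by (rule ball_incl[OF cont inj sub \<open>\<delta> > 0\<close> assms(4)]) (use assms(6) in \<open>auto simp: S_def\<close>)
      then show ?thesis using zc sub by blast
    qed
  qed
  show ?thesis using part1 part2 unfolding S_def by simp
qed

end
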